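(* Let $n\ge 6$ and let $R_n(3,3)$ be the graph obtained from two triangles $uv_1v_2$ and $uw_1w_2$ sharing exactly the vertex $u$ by attaching $n-5$ pendant edges (new leaves) to the vertex $v_1$. Then \[ \operatorname{avm}(R_n(3,3))=\frac{7n-27}{3n-11}. \]
   Context: For a finite simple graph $G$, $\operatorname{avm}(G)$ is the average of $|M|$ over all maximal matchings $M$ of $G$ (a matching is maximal if it is not properly contained in another matching). *)

theory Defs
  imports Main "HOL-Library.Disjoint_Sets" Complex_Main
begin

text \<open>A finite simple graph is represented by its (finite) set of edges, each edge
  being a 2-element set of vertices. Isolated vertices do not affect matchings.\<close>

definition simple_graph :: "'a set set \<Rightarrow> bool" where
  "simple_graph E \<longleftrightarrow> finite E \<and> (\<forall>e\<in>E. card e = 2)"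

definition matching :: "'a set set \<Rightarrow> 'a set set \<Rightarrow> bool" where
  "matching E M \<longleftrightarrow> M \<subseteq> E \<and> (\<forall>e\<in>M. \<forall>f\<in>M. e \<noteq> f \<longrightarrow> e \<inter> f = {})"

definition maximal_matching :: "'a set set \<Rightarrow> 'a set set \<Rightarrow> bool" where
  "maximal_matching E M \<longleftrightarrow> matching E M \<and> (\<forall>M'. matching E M' \<and> M \<subseteq> M' \<longrightarrow> M' = M)"

definition avm :: "'a set set \<Rightarrow> real" where
  "avm E = (\<Sum>M\<in>{M. maximal_matching E M}. real (card M)) / real (card {M. maximal_matching E M})"

text \<open>R_n(3,3): vertices u=0, v1=1, v2=2, w1=3, w2=4, leaves 5,...,n-1 attached to v1.\<close>

definition R33 :: "nat \<Rightarrow> nat set set" where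
  "R33 n = {{0,1},{0,2},{1,2},{0,3},{0,4},{3,4}} \<union> {{1,k} | k. 5 \<le> k \<and> k < n}"

end

theory Submission
  imports Defs
begin

lemma max_iff:
  "maximal_matching E M \<longleftrightarrow> matching E M \<and> (\<forall>e\<in>E. e \<notin> M \<longrightarrow> (\<exists>f\<in>M. e \<inter> f \<noteq> {}))"
proof
  assume a: "maximal_matching E M"
  hence m: "matching E M" by (simp add: maximal_matching_def)
  show "matching E M \<and> (\<forall>e\<in>E. e \<notin> M \<longrightarrow> (\<exists>f\<in>M. e \<inter> f \<noteq> {}))"
  proof (intro conjI m ballI impI)
    fix e assume e: "e \<in> E" "e \<notin> M"
    show "\<exists>f\<in>M. e \<inter> f \<noteq> {}"
    proof (rule ccontr)
      assume c: "\<not> ?thesis"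
      have "matching E (insert e M)" unfolding matching_def
      proof (intro conjI ballI impI)
        show "insert e M \<subseteq> E" using m e(1) unfolding matching_def by simp
        fix x y assume xy: "x \<in> insert e M" "y \<in> insert e M" "x \<noteq> y"
        show "x \<inter> y = {}"
        proof (cases "x = e")
          case True thus ?thesis using xy c by auto
        next
          case False
          show ?thesis
          proof (cases "y = e")
            case True thus ?thesis using xy c False by auto
          next
            case False2: False
            thus ?thesis using xy False m unfolding matching_def by simp
          qed
        qed
      qed
      hence "insert e M = M" using a unfolding maximal_matching_def by auto
      thus False using e by auto
    qed
  qed
next
  assume a: "matching E M \<and> (\<forall>e\<in>E. e \<notin> M \<longrightarrow> (\<exists>f\<in>M. e \<inter> f \<noteq> {}))"
  show "maximal_matching E M" unfolding maximal_matching_def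
  proof (intro conjI allI impI)
    show "matching E M" using a by simp
    fix M' assume b: "matching E M' \<and> M \<subseteq> M'"
    show "M' = M"
    proof (rule ccontr)
      assume "M' \<noteq> M"
      then obtain e where e: "e \<in> M'" "e \<notin> M" using b by blast
      hence "e \<in> E" using b unfolding matching_def by blast
      then obtain f where f: "f \<in> M" "e \<inter> f \<noteq> {}" using a e by blast
      have "f \<in> M'" "e \<noteq> f" using b f e by auto
      thus False using b e f unfolding matching_def by auto
    qed
  qed
qed


definition SS :: "nat \<Rightarrow> nat set set set" where
  "SS n = {{{0,1},{3,4}}, {{1,2},{3,4}}, {{0,3},{1,2}}, {{0,4},{1,2}}}
     \<union> (\<lambda>k. {{0,2},{1,k},{3,4}}) ` {5..<n}
     \<union> (\<lambda>k. {{0,3},{1,k}}) ` {5..<n}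
     \<union> (\<lambda>k. {{0,4},{1,k}}) ` {5..<n}"

lemma mem_R33: "e \<in> R33 n \<longleftrightarrow> e = {0,1} \<or> e = {0,2} \<or> e = {1,2} \<or> e = {0,3} \<or> e = {0,4} \<or> e = {3,4}
   \<or> (\<exists>k. e = {1,k} \<and> 5 \<le> k \<and> k < n)"
  unfolding R33_def by (simp only: Un_iff insert_iff empty_iff mem_Collect_eq disj_assoc simp_thms)


lemma sub_dir:
  assumes n: "n \<ge> 6" and M: "maximal_matching (R33 n) M"
  shows "M \<in> SS n"
proof -
  have mm: "matching (R33 n) M" and mx0: "\<forall>e\<in>R33 n. e \<notin> M \<longrightarrow> (\<exists>f\<in>M. e \<inter> f \<noteq> {})"
    using M unfolding max_iff by simp_all
  have sub: "\<And>e. e \<in> M \<Longrightarrow> e \<in> R33 n" using mm unfolding matching_def by blast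
  have mat: "\<And>e f. e \<in> M \<Longrightarrow> f \<in> M \<Longrightarrow> e \<noteq> f \<Longrightarrow> e \<inter> f = {}"
    using mm unfolding matching_def by blast
  have mx: "\<And>e. e \<in> R33 n \<Longrightarrow> e \<notin> M \<Longrightarrow> \<exists>f\<in>M. e \<inter> f \<noteq> {}" using mx0 by blast
  have E: "\<And>e. e \<in> M \<Longrightarrow> e = {0,1} \<or> e = {0,2} \<or> e = {1,2} \<or> e = {0,3} \<or> e = {0,4} \<or> e = {3,4}
   \<or> (\<exists>k. e = {1,k} \<and> 5 \<le> k \<and> k < n)" using sub unfolding mem_R33 by simp
  have r15: "{1,5} \<in> R33 n" using n unfolding mem_R33 by (intro disjI2 exI[where x=5]) simp
  have r: "{0,1} \<in> R33 n" "{0,2} \<in> R33 n" "{1,2} \<in> R33 n" "{0,3} \<in> R33 n" "{0,4} \<in> R33 n" "{3,4} \<in> R33 n"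
    unfolding mem_R33 by simp_all
  note ds = doubleton_eq_iff
  have img: "\<And>k g. 5 \<le> k \<Longrightarrow> k < n \<Longrightarrow> g k \<in> g ` {5..<n}" by simp
  consider (A) "{0,1} \<in> M" | (B) "{0,2} \<in> M" | (C) "{0,3} \<in> M" | (D) "{0,4} \<in> M"
     | (F) "{0,1} \<notin> M" "{0,2} \<notin> M" "{0,3} \<notin> M" "{0,4} \<notin> M" by blast
  then show ?thesis
  proof cases
    case A
    have h34: "{3,4} \<in> M"
    proof (rule ccontr)
      assume c: "{3,4} \<notin> M"
      then obtain f where f: "f \<in> M" "{3,4} \<inter> f \<noteq> {}" using mx[OF r(6) c] by blast
      show False using E[OF f(1)] mat[OF A f(1)] f c by (elim disjE exE conjE) (simp_all add: ds)
    qed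
    have "M = {{0,1},{3,4}}"
    proof (intro equalityI subsetI)
      fix e assume e: "e \<in> M"
      show "e \<in> {{0,1},{3,4}}"
        using E[OF e] mat[OF A e] by (elim disjE exE conjE) (simp_all add: ds)
    qed (use A h34 in blast)
    thus ?thesis unfolding SS_def by simp
  next
    case B
    have h34: "{3,4} \<in> M"
    proof (rule ccontr)
      assume c: "{3,4} \<notin> M"
      then obtain f where f: "f \<in> M" "{3,4} \<inter> f \<noteq> {}" using mx[OF r(6) c] by blast
      show False using E[OF f(1)] mat[OF B f(1)] f c by (elim disjE exE conjE) (simp_all add: ds)
    qed
    have "\<exists>k. {1,k} \<in> M \<and> 5 \<le> k \<and> k < n"
    proof (cases "{1,5} \<in> M")
      case True thus ?thesis using n by (intro exI[where x=5]) simp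
    next
      case c: False
      then obtain f where f: "f \<in> M" "{1,5} \<inter> f \<noteq> {}" using mx[OF r15 c] by blast
      show ?thesis using E[OF f(1)] mat[OF B f(1)] f c by (elim disjE exE conjE) (simp_all add: ds, blast)
    qed
    then obtain k where k: "{1,k} \<in> M" "5 \<le> k" "k < n" by blast
    have "M = {{0,2},{1,k},{3,4}}"
    proof (intro equalityI subsetI)
      fix e assume e: "e \<in> M"
      show "e \<in> {{0,2},{1,k},{3,4}}"
        using E[OF e] mat[OF B e] mat[OF k(1) e] k by (elim disjE exE conjE) (simp_all add: ds, blast)
    qed (use B h34 k in blast)
    hence "M \<in> (\<lambda>k. {{0,2},{1,k},{3,4}}) ` {5..<n}" using k by simp
    thus ?thesis unfolding SS_def by simp
  next
    case C
    show ?thesis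
    proof (cases "{1,2} \<in> M")
      case h12: True
      have "M = {{0,3},{1,2}}"
      proof (intro equalityI subsetI)
        fix e assume e: "e \<in> M"
        show "e \<in> {{0,3},{1,2}}"
          using E[OF e] mat[OF C e] mat[OF h12 e] by (elim disjE exE conjE) (simp_all add: ds)
      qed (use C h12 in blast)
      thus ?thesis unfolding SS_def by simp
    next
      case c: False
      then obtain f where f: "f \<in> M" "{1,2} \<inter> f \<noteq> {}" using mx[OF r(3) c] by blast
      have "\<exists>k. {1,k} \<in> M \<and> 5 \<le> k \<and> k < n"
        using E[OF f(1)] mat[OF C f(1)] f c by (elim disjE exE conjE) (simp_all add: ds, blast)
      then obtain k where k: "{1,k} \<in> M" "5 \<le> k" "k < n" by blast
      have "M = {{0,3},{1,k}}"
      proof (intro equalityI subsetI)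
        fix e assume e: "e \<in> M"
        show "e \<in> {{0,3},{1,k}}"
          using E[OF e] mat[OF C e] mat[OF k(1) e] k by (elim disjE exE conjE) (simp_all add: ds, blast)
      qed (use C k in blast)
      hence "M \<in> (\<lambda>k. {{0,3},{1,k}}) ` {5..<n}" using k by simp
      thus ?thesis unfolding SS_def by simp
    qed
  next
    case D
    show ?thesis
    proof (cases "{1,2} \<in> M")
      case h12: True
      have "M = {{0,4},{1,2}}"
      proof (intro equalityI subsetI)
        fix e assume e: "e \<in> M"
        show "e \<in> {{0,4},{1,2}}"
          using E[OF e] mat[OF D e] mat[OF h12 e] by (elim disjE exE conjE) (simp_all add: ds)
      qed (use D h12 in blast)
      thus ?thesis unfolding SS_def by simp
    next
      case c: False
      then obtain f where f: "f \<in> M" "{1,2} \<inter> f \<noteq> {}" using mx[OF r(3) c] by blast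
      have "\<exists>k. {1,k} \<in> M \<and> 5 \<le> k \<and> k < n"
        using E[OF f(1)] mat[OF D f(1)] f c by (elim disjE exE conjE) (simp_all add: ds, blast)
      then obtain k where k: "{1,k} \<in> M" "5 \<le> k" "k < n" by blast
      have "M = {{0,4},{1,k}}"
      proof (intro equalityI subsetI)
        fix e assume e: "e \<in> M"
        show "e \<in> {{0,4},{1,k}}"
          using E[OF e] mat[OF D e] mat[OF k(1) e] k by (elim disjE exE conjE) (simp_all add: ds, blast)
      qed (use D k in blast)
      hence "M \<in> (\<lambda>k. {{0,4},{1,k}}) ` {5..<n}" using k by simp
      thus ?thesis unfolding SS_def by simp
    qed
  next
    case F
    have h34: "{3,4} \<in> M"
    proof -
      obtain f where f: "f \<in> M" "{0,3} \<inter> f \<noteq> {}" using mx[OF r(4) F(3)] by blast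
      show ?thesis using E[OF f(1)] f F by (elim disjE exE conjE) (simp_all add: ds)
    qed
    have h12: "{1,2} \<in> M"
    proof -
      obtain f where f: "f \<in> M" "{0,2} \<inter> f \<noteq> {}" using mx[OF r(2) F(2)] by blast
      show ?thesis using E[OF f(1)] f F by (elim disjE exE conjE) (simp_all add: ds)
    qed
    have "M = {{1,2},{3,4}}"
    proof (intro equalityI subsetI)
      fix e assume e: "e \<in> M"
      show "e \<in> {{1,2},{3,4}}"
        using E[OF e] F mat[OF h12 e] e by (elim disjE exE conjE) (simp_all add: ds)
    qed (use h12 h34 in blast)
    thus ?thesis unfolding SS_def by simp
  qed
qed


lemma leafR: "5 \<le> k \<Longrightarrow> k < n \<Longrightarrow> {1,k} \<in> R33 n"
  unfolding mem_R33 by (intro disjI2 exI[where x=k]) simp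

lemma fixR: "{0,1} \<in> R33 n" "{0,2} \<in> R33 n" "{1,2} \<in> R33 n" "{0,3} \<in> R33 n" "{0,4} \<in> R33 n" "{3,4} \<in> R33 n"
  unfolding mem_R33 by simp_all

lemma fixR2: "{0,Suc 0} \<in> R33 n" "{Suc 0,2} \<in> R33 n"
  using fixR by simp_all

lemma leafR2: "5 \<le> k \<Longrightarrow> k < n \<Longrightarrow> {Suc 0,k} \<in> R33 n"
  using leafR by simp

lemma chk:
  assumes "M \<subseteq> R33 n" "\<forall>e\<in>M. \<forall>f\<in>M. e\<noteq>f \<longrightarrow> e\<inter>f={}"
    "\<And>e. e\<in>R33 n \<Longrightarrow> e\<notin>M \<Longrightarrow> \<exists>f\<in>M. e\<inter>f\<noteq>{}"
  shows "maximal_matching (R33 n) M"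
  unfolding max_iff matching_def using assms by blast


lemma sup1:
  fixes M :: "nat set set"
  assumes h: "M = {{0,1},{3,4}}"
  shows "maximal_matching (R33 n) M"
  unfolding h
  apply (rule chk)
  subgoal by (simp add: fixR leafR fixR2 leafR2)
  subgoal by (simp add: doubleton_eq_iff)
  subgoal for e unfolding mem_R33 by (elim disjE exE conjE) (simp_all add: doubleton_eq_iff)
  done

lemma sup2:
  fixes M :: "nat set set"
  assumes h: "M = {{1,2},{3,4}}"
  shows "maximal_matching (R33 n) M"
  unfolding h
  apply (rule chk)
  subgoal by (simp add: fixR leafR fixR2 leafR2)
  subgoal by (simp add: doubleton_eq_iff)
  subgoal for e unfolding mem_R33 by (elim disjE exE conjE) (simp_all add: doubleton_eq_iff)
  done

lemma sup3:
  fixes M :: "nat set set"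
  assumes h: "M = {{0,3},{1,2}}"
  shows "maximal_matching (R33 n) M"
  unfolding h
  apply (rule chk)
  subgoal by (simp add: fixR leafR fixR2 leafR2)
  subgoal by (simp add: doubleton_eq_iff)
  subgoal for e unfolding mem_R33 by (elim disjE exE conjE) (simp_all add: doubleton_eq_iff)
  done

lemma sup4:
  fixes M :: "nat set set"
  assumes h: "M = {{0,4},{1,2}}"
  shows "maximal_matching (R33 n) M"
  unfolding h
  apply (rule chk)
  subgoal by (simp add: fixR leafR fixR2 leafR2)
  subgoal by (simp add: doubleton_eq_iff)
  subgoal for e unfolding mem_R33 by (elim disjE exE conjE) (simp_all add: doubleton_eq_iff)
  done

lemma sup5:
  fixes M :: "nat set set"
  assumes h: "M = {{0,2},{1,k},{3,4}}" and k: "5 \<le> k" "k < n"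
  shows "maximal_matching (R33 n) M"
  unfolding h
  apply (rule chk)
  subgoal using k by (simp add: fixR leafR fixR2 leafR2)
  subgoal using k by (simp add: doubleton_eq_iff)
  subgoal for e unfolding mem_R33 using k by (elim disjE exE conjE) (simp_all add: doubleton_eq_iff)
  done

lemma sup6:
  fixes M :: "nat set set"
  assumes h: "M = {{0,3},{1,k}}" and k: "5 \<le> k" "k < n"
  shows "maximal_matching (R33 n) M"
  unfolding h
  apply (rule chk)
  subgoal using k by (simp add: fixR leafR fixR2 leafR2)
  subgoal using k by (simp add: doubleton_eq_iff)
  subgoal for e unfolding mem_R33 using k by (elim disjE exE conjE) (simp_all add: doubleton_eq_iff)
  done

lemma sup7:
  fixes M :: "nat set set"
  assumes h: "M = {{0,4},{1,k}}" and k: "5 \<le> k" "k < n"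
  shows "maximal_matching (R33 n) M"
  unfolding h
  apply (rule chk)
  subgoal using k by (simp add: fixR leafR fixR2 leafR2)
  subgoal using k by (simp add: doubleton_eq_iff)
  subgoal for e unfolding mem_R33 using k by (elim disjE exE conjE) (simp_all add: doubleton_eq_iff)
  done

lemma sup_dir:
  assumes "M \<in> SS n"
  shows "maximal_matching (R33 n) M"
  using assms unfolding SS_def
  by (elim UnE insertE imageE emptyE) (simp_all add: sup1 sup2 sup3 sup4 sup5 sup6 sup7)


lemma set_eq: "n \<ge> 6 \<Longrightarrow> {M. maximal_matching (R33 n) M} = SS n"
  using sub_dir sup_dir by blast

lemma injB: "inj_on (\<lambda>k::nat. {{0,2},{1,k},{3,4}}) {5..<n}"
proof (rule inj_onI)
  fix k j :: nat assume kj: "k \<in> {5..<n}" "j \<in> {5..<n}" and eq: "{{0,2},{1,k},{3,4}} = {{0::nat,2},{1,j},{3,4}}"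
  have "{1,k} \<in> {{0::nat,2},{1,j},{3,4}}" using eq by (metis insertCI)
  thus "k = j" using kj by (simp add: doubleton_eq_iff)
qed

lemma injC: "inj_on (\<lambda>k::nat. {{0,3},{1,k}}) {5..<n}"
  by (rule inj_onI) (simp add: doubleton_eq_iff)

lemma injD: "inj_on (\<lambda>k::nat. {{0,4},{1,k}}) {5..<n}"
  by (rule inj_onI) (simp add: doubleton_eq_iff)

lemma cardB: "5 \<le> (k::nat) \<Longrightarrow> card {{0,2},{1,k},{3,4}} = 3"
  by (simp add: doubleton_eq_iff)
lemma cardC: "5 \<le> (k::nat) \<Longrightarrow> card {{0,3},{1,k}} = 2"
  by (simp add: doubleton_eq_iff)
lemma cardD: "5 \<le> (k::nat) \<Longrightarrow> card {{0,4},{1,k}} = 2"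
  by (simp add: doubleton_eq_iff)


lemma sum_img:
  assumes "inj_on g A" "\<And>k. k \<in> A \<Longrightarrow> card (g k) = c"
  shows "sum card (g ` A) = c * card A"
proof -
  have "sum card (g ` A) = sum (card \<circ> g) A" using assms(1) by (rule sum.reindex)
  also have "\<dots> = sum (\<lambda>_. c) A" using assms(2) by (intro sum.cong) auto
  finally show ?thesis by simp
qed

theorem lemma3p1:
  fixes n :: nat
  assumes "n \<ge> 6"
  shows "avm (R33 n) = (7 * real n - 27) / (3 * real n - 11)"
proof -
  define X :: "nat set set set" where "X = {{{0,1},{3,4}}, {{1,2},{3,4}}, {{0,3},{1,2}}, {{0,4},{1,2}}}"
  define B where "B = (\<lambda>k::nat. {{0::nat,2},{1,k},{3,4}}) ` {5..<n}"
  define C where "C = (\<lambda>k::nat. {{0::nat,3},{1,k}}) ` {5..<n}"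
  define D where "D = (\<lambda>k::nat. {{0::nat,4},{1,k}}) ` {5..<n}"
  have SS: "SS n = X \<union> B \<union> C \<union> D" unfolding SS_def X_def B_def C_def D_def by (rule refl)
  have fin: "finite X" "finite B" "finite C" "finite D" unfolding X_def B_def C_def D_def by simp_all
  have cX: "\<And>x. x \<in> X \<Longrightarrow> card x = 2" unfolding X_def
    by (elim insertE emptyE; simp add: doubleton_eq_iff)
  have cB: "\<And>x. x \<in> B \<Longrightarrow> card x = 3" unfolding B_def by (elim imageE) (simp add: doubleton_eq_iff)
  have cC: "\<And>x. x \<in> C \<Longrightarrow> card x = 2" unfolding C_def by (elim imageE) (simp add: doubleton_eq_iff)
  have cD: "\<And>x. x \<in> D \<Longrightarrow> card x = 2" unfolding D_def by (elim imageE) (simp add: doubleton_eq_iff)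
  have d1: "X \<inter> B = {}"
  proof (rule Int_emptyI)
    fix x assume a: "x \<in> X" "x \<in> B"
    show False using cX[OF a(1)] cB[OF a(2)] by simp
  qed
  have d2: "(X \<union> B) \<inter> C = {}"
  proof (rule Int_emptyI)
    fix x assume a: "x \<in> X \<union> B" "x \<in> C"
    then obtain k where k: "x = {{0,3},{1,k}}" "5 \<le> k" unfolding C_def by auto
    have "x \<notin> X" unfolding X_def k(1) using k(2) by (simp add: doubleton_eq_iff)
    moreover have "x \<notin> B" using cB cC a(2) by fastforce
    ultimately show False using a(1) by simp
  qed
  have d3: "(X \<union> B \<union> C) \<inter> D = {}"
  proof (rule Int_emptyI)
    fix x assume a: "x \<in> X \<union> B \<union> C" "x \<in> D"
    then obtain k where k: "x = {{0,4},{1,k}}" "5 \<le> k" unfolding D_def by auto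
    have "x \<notin> X" unfolding X_def k(1) using k(2) by (simp add: doubleton_eq_iff)
    moreover have "x \<notin> B" using cB cD a(2) by fastforce
    moreover have "x \<notin> C"
    proof
      assume "x \<in> C"
      then obtain j where "x = {{0,3},{1,j}}" unfolding C_def by auto
      thus False using k by (simp add: doubleton_eq_iff)
    qed
    ultimately show False using a(1) by simp
  qed
  have sX: "sum card X = 8" "card X = 4" unfolding X_def by (simp_all add: doubleton_eq_iff)
  have sB: "sum card B = 3 * (n-5)" "card B = n - 5"
  proof -
    have "sum card B = 3 * card {5..<n}" unfolding B_def
      by (rule sum_img[OF injB]) (simp add: doubleton_eq_iff)
    moreover have "card B = card {5..<n}" unfolding B_def by (rule card_image[OF injB])
    ultimately show "sum card B = 3 * (n-5)" "card B = n - 5" by simp_all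
  qed
  have sC: "sum card C = 2 * (n-5)" "card C = n - 5"
  proof -
    have "sum card C = 2 * card {5..<n}" unfolding C_def
      by (rule sum_img[OF injC]) (simp add: doubleton_eq_iff)
    moreover have "card C = card {5..<n}" unfolding C_def by (rule card_image[OF injC])
    ultimately show "sum card C = 2 * (n-5)" "card C = n - 5" by simp_all
  qed
  have sD: "sum card D = 2 * (n-5)" "card D = n - 5"
  proof -
    have "sum card D = 2 * card {5..<n}" unfolding D_def
      by (rule sum_img[OF injD]) (simp add: doubleton_eq_iff)
    moreover have "card D = card {5..<n}" unfolding D_def by (rule card_image[OF injD])
    ultimately show "sum card D = 2 * (n-5)" "card D = n - 5" by simp_all
  qed
  have tot: "sum card (SS n) = 8 + 7 * (n-5)"
    unfolding SS using fin d1 d2 d3 sX sB sC sD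
    by (simp add: sum.union_disjoint)
  have tc: "card (SS n) = 4 + 3 * (n-5)"
    unfolding SS using fin d1 d2 d3 sX sB sC sD
    by (simp add: card_Un_disjoint)
  have "avm (R33 n) = real (sum card (SS n)) / real (card (SS n))"
    unfolding avm_def set_eq[OF assms] by simp
  also have "\<dots> = (7 * real n - 27) / (3 * real n - 11)"
    unfolding tot tc using assms by (simp add: of_nat_diff algebra_simps)
  finally show ?thesis .
qed

end
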